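(* Assume $\tau_1\le\dots\le\tau_m$, let $f$ be the canonical flow and $T>0$. Then $M_T(f)=\max\{T_i(T): i\in S(T)\}$, where $S(T)=\{i\in[m]:T_i(T)=\min_{j\in[m]}T_j(T)\}$.
   Context: Parallel-link dynamic flow model. Fix $m\in\mathbb N$, capacities $\nu_1,\dots,\nu_m\in\mathbb Q_{>0}$ and an inflow rate $u\in\mathbb Q_{>0}$; $[m]=\{1,\dots,m\}$, $[x]^+=\max\{x,0\}$. A flow is a family $f=(f_i)_{i\in[m]}$ of measurable $f_i:\mathbb R_{\ge0}\to\mathbb R_{\ge0}$ with $\sum_i f_i(\theta)=u$ for a.e. $\theta\ge0$. The queue length $z_i(\theta)$ of link $i$ is the absolutely continuous function with $z_i(0)=0$ and, for a.e. $\theta$, $z_i'(\theta)=f_i(\theta)-\nu_i$ if $z_i(\theta)>0$ and $z_i'(\theta)=[f_i(\theta)-\nu_i]^+$ if $z_i(\theta)=0$. Given travel times $\tau\in\mathbb R^m_{\ge0}$, the exit time of link $i$ at time $\theta$ is $T_i(\theta)=\theta+z_i(\theta)/\nu_i+\tau_i$. For a time horizon $T>0$ the makespan of $f$ is $M_T(f)=\sup\{T_i(\theta):\theta\in[0,T], i\in[m]\text{ with }f_i(\theta)>0\}$. Canonical flow (for $\tau_1\le\dots\le\tau_m$): $\bar\nu(i)=\sum_{j=1}^i\nu_j$, $\bar\nu(0)=0$; $\theta^*_1=0$ and for $i=1,\dots,m-1$, $\theta^*_{i+1}=\theta^*_i+\frac{\bar\nu(i)}{u-\bar\nu(i)}(\tau_{i+1}-\tau_i)$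 if $\bar\nu(i)<u$ and $\theta^*_{i+1}=\infty$ otherwise; $\theta^*_{m+1}=\infty$. Let $k=\max\{j\in\{0,\dots,m\}:\bar\nu(j)<u\}$. Define $f_i(\theta)=\frac{u}{\bar\nu(j)}\nu_i$ if $i\le k$ and $\theta\in[\theta^*_j,\theta^*_{j+1})$ for some $j\in\{i,\dots,k\}$; $f_i(\theta)=\nu_i$ if $i\le k$ and $\theta\ge\theta^*_{k+1}$; $f_{k+1}(\theta)=u-\bar\nu(k)$ if $k<m$ and $\theta\ge\theta^*_{k+1}$; $f_i(\theta)=0$ otherwise. *)

theory Defs
  imports "HOL-Analysis.Analysis"
begin

text \<open>Parallel-link dynamic flow model. Links are indexed by 1..m; capacities nu,
  free-flow travel times tau (functions on nat), inflow rate u.\<close>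

definition nubar :: "(nat \<Rightarrow> real) \<Rightarrow> nat \<Rightarrow> real" where
  "nubar nu i = (\<Sum>j=1..i. nu j)"

definition abs_cont_on :: "real \<Rightarrow> real \<Rightarrow> (real \<Rightarrow> real) \<Rightarrow> bool" where
  "abs_cont_on a b g \<longleftrightarrow>
     (\<forall>\<epsilon>>0. \<exists>\<delta>>0. \<forall>(n::nat) (s::nat \<Rightarrow> real) (t::nat \<Rightarrow> real).
        (\<forall>i<n. a \<le> s i \<and> s i \<le> t i \<and> t i \<le> b) \<and>
        (\<forall>i<n. \<forall>j<n. i \<noteq> j \<longrightarrow> t i \<le> s j \<or> t j \<le> s i) \<and>
        (\<Sum>i<n. t i - s i) < \<delta>
        \<longrightarrow> (\<Sum>i<n. \<bar>g (t i) - g (s i)\<bar>) < \<epsilon>)"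

definition is_queue :: "real \<Rightarrow> (real \<Rightarrow> real) \<Rightarrow> (real \<Rightarrow> real) \<Rightarrow> bool" where
  "is_queue c g z \<longleftrightarrow>
     z 0 = 0 \<and> (\<forall>\<theta>\<ge>0. z \<theta> \<ge> 0) \<and> (\<forall>b\<ge>0. abs_cont_on 0 b z) \<and>
     (AE \<theta> in lborel. 0 < \<theta> \<longrightarrow>
        ((z \<theta> > 0 \<longrightarrow> (z has_real_derivative (g \<theta> - c)) (at \<theta>)) \<and>
         (z \<theta> = 0 \<longrightarrow> (z has_real_derivative (max (g \<theta> - c) 0)) (at \<theta>))))"

definition exit_time ::
  "(nat \<Rightarrow> real) \<Rightarrow> (nat \<Rightarrow> real) \<Rightarrow> (nat \<Rightarrow> real \<Rightarrow> real) \<Rightarrow> nat \<Rightarrow> real \<Rightarrow> real" where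
  "exit_time nu tau z i \<theta> = \<theta> + z i \<theta> / nu i + tau i"

definition makespan ::
  "nat \<Rightarrow> (nat \<Rightarrow> real) \<Rightarrow> (nat \<Rightarrow> real) \<Rightarrow> (nat \<Rightarrow> real \<Rightarrow> real) \<Rightarrow>
   (nat \<Rightarrow> real \<Rightarrow> real) \<Rightarrow> real \<Rightarrow> ereal" where
  "makespan m nu tau f z T =
     Sup {ereal (exit_time nu tau z i \<theta>) | i \<theta>. i \<in> {1..m} \<and> \<theta> \<in> {0..T} \<and> f i \<theta> > 0}"

fun theta_star :: "nat \<Rightarrow> (nat \<Rightarrow> real) \<Rightarrow> (nat \<Rightarrow> real) \<Rightarrow> real \<Rightarrow> nat \<Rightarrow> ereal" where
  "theta_star m nu tau u 0 = 0"
| "theta_star m nu tau u (Suc 0) = 0"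
| "theta_star m nu tau u (Suc (Suc i)) =
     (if Suc i \<le> m - 1 \<and> nubar nu (Suc i) < u
      then theta_star m nu tau u (Suc i)
           + ereal (nubar nu (Suc i) / (u - nubar nu (Suc i)) * (tau (Suc (Suc i)) - tau (Suc i)))
      else \<infinity>)"

definition kidx :: "nat \<Rightarrow> (nat \<Rightarrow> real) \<Rightarrow> real \<Rightarrow> nat" where
  "kidx m nu u = (GREATEST j. j \<le> m \<and> nubar nu j < u)"

definition canonical_flow ::
  "nat \<Rightarrow> (nat \<Rightarrow> real) \<Rightarrow> (nat \<Rightarrow> real) \<Rightarrow> real \<Rightarrow> nat \<Rightarrow> real \<Rightarrow> real" where
  "canonical_flow m nu tau u i \<theta> =
     (let k = kidx m nu u; ts = theta_star m nu tau u in
      if 1 \<le> i \<and> i \<le> k \<and> (\<exists>j\<in>{i..k}. ts j \<le> ereal \<theta> \<and> ereal \<theta> < ts (Suc j))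
        then u / nubar nu (THE j. j \<in> {i..k} \<and> ts j \<le> ereal \<theta> \<and> ereal \<theta> < ts (Suc j)) * nu i
      else if 1 \<le> i \<and> i \<le> k \<and> ts (Suc k) \<le> ereal \<theta> then nu i
      else if i = Suc k \<and> k < m \<and> ts (Suc k) \<le> ereal \<theta> then u - nubar nu k
      else 0)"

end

theory Submission
  imports Defs
begin


lemma negligible_open_cover:
  fixes S :: "real set"
  assumes "negligible S" "e > 0"
  obtains T where "open T" "S \<subseteq> T" "T \<in> lmeasurable" "measure lebesgue T < e"
proof -
  have "S \<in> sets lebesgue" using assms by (simp add: negligible_iff_null_sets null_setsD2)
  then obtain T where T: "open T" "S \<subseteq> T" "(T - S) \<in> lmeasurable" "measure lebesgue (T - S) < e"
    using sets_lebesgue_outer_open [OF _ \<open>e>0\<close>]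
    by (metis emeasure_eq_measure2 ennreal_leI linorder_not_le)
  have "T = (T - S) \<union> S" using T by auto
  moreover have "S \<in> lmeasurable" using assms
    by (simp add: negligible_imp_measurable)
  ultimately have "T \<in> lmeasurable" using T by (metis fmeasurable.Un)
  moreover have "measure lebesgue T < e"
    using T assms by (simp add: measure_Diff_null_set negligible_iff_null_sets)
  ultimately show ?thesis using T that by blast
qed

lemma interval_order:
  fixes u v u' v' :: real
  assumes "u < v" "u' < v'" "{u<..<v} \<inter> {u'<..<v'} = {}"
  shows "v \<le> u' \<or> v' \<le> u"
proof (rule ccontr)
  assume "\<not> ?thesis"
  then have "max u u' < min v v'" using assms by auto
  then have "(max u u' + min v v')/2 \<in> {u<..<v} \<inter> {u'<..<v'}" by auto
  then show False using assms by blast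
qed

lemma straddle_nonpos:
  fixes g :: "real \<Rightarrow> real"
  assumes "(g has_real_derivative D) (at x)" "D \<le> 0" "e > 0"
  obtains r where "r > 0" "\<And>u v. u \<le> x \<Longrightarrow> x \<le> v \<Longrightarrow> u \<in> ball x r \<Longrightarrow> v \<in> ball x r \<Longrightarrow> g v - g u \<le> e * (v - u)"
proof -
  have "(g has_derivative (*) D) (at x)" using assms(1) by (simp add: has_field_derivative_def)
  then obtain r where r: "r > 0" "\<And>y. norm (y - x) < r \<Longrightarrow> norm (g y - g x - D * (y - x)) \<le> e * norm (y - x)"
    using assms(3) unfolding has_derivative_at_alt by blast
  show ?thesis
  proof (rule that[OF r(1)])
    fix u v assume uv: "u \<le> x" "x \<le> v" "u \<in> ball x r" "v \<in> ball x r"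
    have 1: "\<bar>g v - g x - D * (v - x)\<bar> \<le> e * \<bar>v - x\<bar>" using r(2)[of v] uv by (simp add: dist_norm)
    have 2: "\<bar>g u - g x - D * (u - x)\<bar> \<le> e * \<bar>u - x\<bar>" using r(2)[of u] uv by (simp add: dist_norm dist_commute)
    have "D * (v - x) \<le> 0" "D * (x - u) \<le> 0" using uv assms(2) by (auto simp: mult_nonpos_nonneg)
    then show "g v - g u \<le> e * (v - u)" using 1 2 uv by (auto simp: abs_if algebra_simps split: if_splits)
  qed
qed

lemma ac_deriv_nonpos:
  fixes g :: "real \<Rightarrow> real"
  assumes ab: "a \<le> b" and ac: "abs_cont_on a b g" and N: "negligible N"
    and der: "\<And>x. x \<in> {a..b} \<Longrightarrow> x \<notin> N \<Longrightarrow> \<exists>D. D \<le> 0 \<and> (g has_real_derivative D) (at x)"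
  shows "g b \<le> g a"
proof -
  have main: "g b - g a \<le> e * (b - a + 1)" if e: "e > 0" for e
  proof -
    obtain \<delta> where "\<delta> > 0" and h\<delta>0: "\<forall>(n::nat) s t. (\<forall>i<n. a \<le> s i \<and> s i \<le> t i \<and> t i \<le> b) \<and>
        (\<forall>i<n. \<forall>j<n. i \<noteq> j \<longrightarrow> t i \<le> s j \<or> t j \<le> s i) \<and>
        (\<Sum>i<n. t i - s i) < \<delta> \<longrightarrow> (\<Sum>i<n. \<bar>g (t i) - g (s i)\<bar>) < e"
        using ac e unfolding abs_cont_on_def by blast
    obtain U where U: "open U" "N \<subseteq> U" "U \<in> lmeasurable" "measure lebesgue U < \<delta>"
      using negligible_open_cover[OF N \<open>\<delta>>0\<close>] by blast
    have "\<exists>r>0. (x \<in> N \<longrightarrow> ball x r \<subseteq> U) \<and> (x \<notin> N \<and> x \<in> {a..b} \<longrightarrow>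
       (\<forall>u v. u \<le> x \<longrightarrow> x \<le> v \<longrightarrow> u \<in> ball x r \<longrightarrow> v \<in> ball x r \<longrightarrow> g v - g u \<le> e * (v - u)))" for x
    proof (cases "x \<in> N")
      case True
      then obtain r where "r > 0" "ball x r \<subseteq> U" using U by (meson open_contains_ball subsetD)
      then show ?thesis using True by blast
    next
      case False
      show ?thesis
      proof (cases "x \<in> {a..b}")
        case True
        then obtain D where "D \<le> 0" "(g has_real_derivative D) (at x)" using der False by blast
        then obtain r where "r > 0" "\<And>u v. u \<le> x \<Longrightarrow> x \<le> v \<Longrightarrow> u \<in> ball x r \<Longrightarrow> v \<in> ball x r \<Longrightarrow> g v - g u \<le> e * (v - u)"
          using straddle_nonpos e by metis
        then show ?thesis using False by blast
      next
        case False
        then show ?thesis using \<open>x \<notin> N\<close> by (intro exI[of _ "1::real"]) auto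
      qed
    qed
    note ex = this
    have "\<exists>\<rho>. \<forall>x. \<rho> x > 0 \<and> (x \<in> N \<longrightarrow> ball x (\<rho> x) \<subseteq> U) \<and> (x \<notin> N \<and> x \<in> {a..b} \<longrightarrow>
       (\<forall>u v. u \<le> x \<longrightarrow> x \<le> v \<longrightarrow> u \<in> ball x (\<rho> x) \<longrightarrow> v \<in> ball x (\<rho> x) \<longrightarrow> g v - g u \<le> e * (v - u)))"
      using ex by (rule choice[OF allI])
    then obtain \<rho> where \<rho>0: "\<forall>x. \<rho> x > 0 \<and> (x \<in> N \<longrightarrow> ball x (\<rho> x) \<subseteq> U) \<and> (x \<notin> N \<and> x \<in> {a..b} \<longrightarrow>
       (\<forall>u v. u \<le> x \<longrightarrow> x \<le> v \<longrightarrow> u \<in> ball x (\<rho> x) \<longrightarrow> v \<in> ball x (\<rho> x) \<longrightarrow> g v - g u \<le> e * (v - u)))"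
      by blast
    have \<rho>: "\<And>x. \<rho> x > 0" "\<And>x. x \<in> N \<Longrightarrow> ball x (\<rho> x) \<subseteq> U"
      "\<And>x u v. x \<notin> N \<Longrightarrow> x \<in> {a..b} \<Longrightarrow> u \<le> x \<Longrightarrow> x \<le> v \<Longrightarrow> u \<in> ball x (\<rho> x) \<Longrightarrow> v \<in> ball x (\<rho> x) \<Longrightarrow> g v - g u \<le> e * (v - u)"
      using \<rho>0 by blast+
    have "gauge (\<lambda>x. ball x (\<rho> x))" using \<rho>(1) by (simp add: gauge_ball_dependent)
    then obtain p where p: "p tagged_division_of {a..b}" "(\<lambda>x. ball x (\<rho> x)) fine p"
      using fine_division_exists_real by blast
    have fin: "finite p" using p by blast
    have pK: "\<exists>u v. K = {u..v} \<and> u \<le> x \<and> x \<le> v \<and> a \<le> u \<and> v \<le> b \<and> K \<subseteq> ball x (\<rho> x)" if xKp: "(x,K) \<in> p" for x K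
    proof -
      obtain u v where K: "K = cbox u v" using p(1) xKp by (meson tagged_division_ofD(4))
      have "x \<in> K" "K \<subseteq> {a..b}" using p(1) xKp by (meson tagged_division_ofD)+
      moreover have "K \<subseteq> ball x (\<rho> x)" using p(2) xKp by (force simp: fine_def)
      ultimately show ?thesis using K by (auto intro!: exI[of _ u] exI[of _ v])
    qed
    define \<phi> where "\<phi> K = g (Sup K) - g (Inf K)" for K
    define p1 where "p1 = {(x,K)\<in>p. x \<in> N \<and> measure lborel K > 0}"
    have tot: "(\<Sum>(x,K)\<in>p. \<phi> K) = g b - g a"
      using additive_tagged_division_1[OF ab p(1), of g] by (simp add: \<phi>_def)
    have split: "(\<Sum>(x,K)\<in>p. \<phi> K) = (\<Sum>(x,K)\<in>p. if (x,K) \<in> p1 then \<phi> K else 0) + (\<Sum>(x,K)\<in>p. if x \<notin> N then \<phi> K else 0)"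
      unfolding sum.distrib[symmetric]
    proof (rule sum.cong[OF refl])
      fix xK assume "xK \<in> p"
      obtain x K where xK: "xK = (x,K)" by fastforce
      obtain u v where uv: "K = {u..v}" "u \<le> v" using pK \<open>xK \<in> p\<close> xK by force
      have phiK: "\<phi> K = g v - g u" using uv by (simp add: \<phi>_def)
      have mK: "measure lborel K = v - u" using uv by simp
      have mem: "(x,K) \<in> p1 \<longleftrightarrow> x \<in> N \<and> u < v" using \<open>xK \<in> p\<close> xK mK uv(2) by (auto simp: p1_def)
      show "(case xK of (x, K) \<Rightarrow> \<phi> K) = (case xK of (x, K) \<Rightarrow> if (x, K) \<in> p1 then \<phi> K else 0) + (case xK of (x, K) \<Rightarrow> if x \<notin> N then \<phi> K else 0)"
      proof (cases "x \<in> N")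
        case True
        then show ?thesis using mem phiK uv(2) by (cases "u < v") (auto simp: xK)
      next
        case False
        then show ?thesis using mem by (simp add: xK)
      qed
    qed
    have p1sub: "p1 \<subseteq> p" by (auto simp: p1_def)
    have s1: "(\<Sum>(x,K)\<in>p. if (x,K) \<in> p1 then \<phi> K else 0) = (\<Sum>(x,K)\<in>p1. \<phi> K)"
      using sum.mono_neutral_cong_right[OF fin p1sub, of "\<lambda>(x,K). if (x,K) \<in> p1 then \<phi> K else 0" "\<lambda>(x,K). \<phi> K"]
      by (auto simp: split_beta)
    have s2: "(\<Sum>(x,K)\<in>p. if x \<notin> N then \<phi> K else 0) \<le> (\<Sum>(x,K)\<in>p. e * measure lborel K)"
    proof (rule sum_mono)
      fix xK assume "xK \<in> p"
      obtain x K where xK: "xK = (x,K)" by fastforce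
      obtain u v where uv: "K = {u..v}" "u \<le> x" "x \<le> v" "a \<le> u" "v \<le> b" "K \<subseteq> ball x (\<rho> x)"
        using pK \<open>xK \<in> p\<close> xK by blast
      have "u \<in> ball x (\<rho> x)" "v \<in> ball x (\<rho> x)" using uv(1,2,3,6) by (simp_all add: subset_iff)
      moreover have "\<phi> K = g v - g u" "measure lborel K = v - u" using uv by (simp_all add: \<phi>_def)
      moreover have "x \<in> {a..b}" using uv by simp
      ultimately show "(case xK of (x, K) \<Rightarrow> if x \<notin> N then \<phi> K else 0) \<le> (case xK of (x, K) \<Rightarrow> e * measure lborel K)"
        using \<rho>(3)[of x u v] uv(2,3) e by (cases "x \<in> N") (simp_all add: xK)
    qed
    have s2': "(\<Sum>(x,K)\<in>p. e * measure lborel K) = e * (b - a)"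
      using additive_content_tagged_division[of p a b] p(1) ab
      by (simp add: sum_distrib_left[symmetric] split_beta)
    have s1': "(\<Sum>(x,K)\<in>p1. \<phi> K) < e"
    proof -
      have fin1: "finite p1" using fin p1sub finite_subset by blast
      obtain h where h: "bij_betw h {0..<card p1} p1" using ex_bij_betw_nat_finite[OF fin1] by blast
      define n where "n = card p1"
      define s where "s i = Inf (snd (h i))" for i
      define t where "t i = Sup (snd (h i))" for i
      have p1K: "\<exists>u v. K = {u..v} \<and> u < v \<and> a \<le> u \<and> v \<le> b \<and> K \<subseteq> U" if xKp1: "(x,K) \<in> p1" for x K
      proof -
        obtain u v where uv: "K = {u..v}" "u \<le> x" "x \<le> v" "a \<le> u" "v \<le> b" "K \<subseteq> ball x (\<rho> x)"
          using pK xKp1 p1sub by blast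
        have "x \<in> N" "measure lborel K > 0" using xKp1 by (auto simp: p1_def)
        moreover have "measure lborel K = v - u" using uv by simp
        ultimately have "u < v" by simp
        moreover have "K \<subseteq> U" using uv(6) \<rho>(2)[OF \<open>x \<in> N\<close>] by blast
        ultimately show ?thesis using uv by blast
      qed
      have hK: "h i \<in> p1 \<and> snd (h i) = {s i..t i} \<and> s i < t i \<and> a \<le> s i \<and> t i \<le> b \<and> snd (h i) \<subseteq> U" if "i < n" for i
      proof -
        have hi: "h i \<in> p1" using bij_betw_apply[OF h] that by (simp add: n_def)
        then have "(fst (h i), snd (h i)) \<in> p1" by simp
        then obtain u v where "snd (h i) = {u..v}" "u < v" "a \<le> u" "v \<le> b" "snd (h i) \<subseteq> U" using p1K by blast
        then show ?thesis using hi by (auto simp: s_def t_def)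
      qed
      have disj: "interior K1 \<inter> interior K2 = {}" if "(x1,K1) \<in> p1" "(x2,K2) \<in> p1" "(x1,K1) \<noteq> (x2,K2)" for x1 K1 x2 K2
        by (rule tagged_division_ofD(5)[OF p(1)]) (use that p1sub in auto)
      have C1: "\<forall>i<n. a \<le> s i \<and> s i \<le> t i \<and> t i \<le> b"
      proof (intro allI impI)
        fix i assume "i < n"
        then show "a \<le> s i \<and> s i \<le> t i \<and> t i \<le> b" using hK[of i] by auto
      qed
      have C2: "\<forall>i<n. \<forall>j<n. i \<noteq> j \<longrightarrow> t i \<le> s j \<or> t j \<le> s i"
      proof (intro allI impI)
        fix i j assume ij: "i < n" "j < n" "i \<noteq> j"
        then have "h i \<noteq> h j" using inj_onD[OF bij_betw_imp_inj_on[OF h], of i j] by (auto simp: n_def)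
        have "snd (h i) = {s i..t i}" "s i < t i" "snd (h j) = {s j..t j}" "s j < t j"
          using hK[OF ij(1)] hK[OF ij(2)] by auto
        moreover have "h i \<in> p1" "h j \<in> p1" using hK ij by auto
        ultimately have "interior (snd (h i)) \<inter> interior (snd (h j)) = {}"
          using disj[of "fst (h i)" "snd (h i)" "fst (h j)" "snd (h j)"] \<open>h i \<noteq> h j\<close> by (metis prod.collapse)
        then have "{s i<..<t i} \<inter> {s j<..<t j} = {}" using \<open>snd (h i) = {s i..t i}\<close> \<open>snd (h j) = {s j..t j}\<close> by simp
        then show "t i \<le> s j \<or> t j \<le> s i" using interval_order[of "s i" "t i" "s j" "t j"] \<open>s i < t i\<close> \<open>s j < t j\<close> by blast
      qed
      have inj: "inj_on snd p1"
      proof (rule inj_onI)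
        fix y1 y2 assume y: "y1 \<in> p1" "y2 \<in> p1" "snd y1 = snd y2"
        show "y1 = y2"
        proof (rule ccontr)
          assume "y1 \<noteq> y2"
          obtain x1 K where 1: "y1 = (x1,K)" by fastforce
          obtain x2 where 2: "y2 = (x2,K)" using y(3) 1 by (metis prod.collapse snd_conv)
          obtain u v where "K = {u..v}" "u < v" using p1K y(1) 1 by blast
          moreover have "interior K \<inter> interior K = {}" using disj[of x1 K x2 K] y 1 2 \<open>y1 \<noteq> y2\<close> by simp
          ultimately show False by simp
        qed
      qed
      have bij': "bij_betw (snd \<circ> h) {..<n} (snd ` p1)"
        using bij_betw_trans[OF h[unfolded atLeast0LessThan] inj_on_imp_bij_betw[OF inj]] by (simp add: n_def)
      have sumeq: "(\<Sum>i<n. F (snd (h i))) = (\<Sum>K\<in>snd ` p1. F K)" for F :: "real set \<Rightarrow> real"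
        using sum.reindex_bij_betw[OF bij', of F] by simp
      have sumeq2: "(\<Sum>K\<in>snd ` p1. F K) = (\<Sum>(x,K)\<in>p1. F K)" for F :: "real set \<Rightarrow> real"
        using sum.reindex[OF inj, of F] by (simp add: split_beta comp_def)
      have ts: "t i - s i = measure lborel (snd (h i))" "\<bar>g (t i) - g (s i)\<bar> = \<bar>\<phi> (snd (h i))\<bar>" if "i < n" for i
        using hK[OF that] by (auto simp: \<phi>_def)
      have "(\<Sum>i<n. t i - s i) = (\<Sum>K\<in>snd ` p1. measure lborel K)"
        using sumeq[of "measure lborel"] ts by simp
      also have "\<dots> = (\<Sum>K\<in>snd ` p1. measure lebesgue K)"
      proof (rule sum.cong[OF refl])
        fix K assume "K \<in> snd ` p1"
        then obtain u v where "K = {u..v}" using p1K by force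
        then show "measure lborel K = measure lebesgue K" by (simp add: measure_completion)
      qed
      also have "\<dots> = measure lebesgue (\<Union>(snd ` p1))"
      proof (rule measure_negligible_finite_Union[symmetric])
        show "finite (snd ` p1)" using fin1 by simp
        show "S \<in> lmeasurable" if Sin: "S \<in> snd ` p1" for S
        proof -
          obtain x where "(x,S) \<in> p1" using Sin by force
          then obtain u v where "S = {u..v}" using p1K by blast
          then show ?thesis by simp
        qed
        show "pairwise (\<lambda>S T. negligible (S \<inter> T)) (snd ` p1)"
        proof (rule pairwiseI)
          fix S T assume ST: "S \<in> snd ` p1" "T \<in> snd ` p1" "S \<noteq> T"
          then obtain x1 x2 where 1: "(x1,S) \<in> p1" "(x2,T) \<in> p1" by force
          obtain u v where uv: "S = {u..v}" "u < v" using p1K 1 by blast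
          obtain u' v' where uv': "T = {u'..v'}" "u' < v'" using p1K 1 by blast
          have "interior S \<inter> interior T = {}" using disj[OF 1] ST by simp
          then have "v \<le> u' \<or> v' \<le> u" using interval_order[of u v u' v'] uv uv' by simp
          then have "S \<inter> T \<subseteq> {v, v'}" using uv uv' by auto
          then show "negligible (S \<inter> T)" by (meson finite.emptyI finite_insert negligible_finite negligible_subset)
        qed
      qed
      also have "\<dots> \<le> measure lebesgue U"
      proof (rule measure_mono_fmeasurable)
        show "\<Union>(snd ` p1) \<subseteq> U"
        proof
          fix y assume "y \<in> \<Union>(snd ` p1)"
          then obtain x K where "(x,K) \<in> p1" "y \<in> K" by force
          then show "y \<in> U" using p1K by blast
        qed
        show "U \<in> fmeasurable lebesgue" using U by simp
        have "K \<in> sets lebesgue" if Kin: "K \<in> snd ` p1" for K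
        proof -
          obtain u v where "K = {u..v}" using p1K Kin by force
          then show ?thesis by simp
        qed
        then show "\<Union>(snd ` p1) \<in> sets lebesgue" using fin1 by (intro sets.finite_Union) auto
      qed
      finally have C3: "(\<Sum>i<n. t i - s i) < \<delta>" using U by simp
      have "(\<Sum>i<n. \<bar>g (t i) - g (s i)\<bar>) < e" by (rule h\<delta>0[rule_format, OF conjI[OF C1 conjI[OF C2 C3]]])
      moreover have "(\<Sum>i<n. \<bar>g (t i) - g (s i)\<bar>) = (\<Sum>(x,K)\<in>p1. \<bar>\<phi> K\<bar>)"
        using sumeq[of "\<lambda>K. \<bar>\<phi> K\<bar>"] sumeq2[of "\<lambda>K. \<bar>\<phi> K\<bar>"] ts by simp
      moreover have "(\<Sum>(x,K)\<in>p1. \<phi> K) \<le> (\<Sum>(x,K)\<in>p1. \<bar>\<phi> K\<bar>)"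
        by (rule sum_mono) auto
      ultimately show ?thesis by simp
    qed
    show ?thesis using tot split s1 s2 s2' s1' by (simp add: algebra_simps)
  qed
  have "g b - g a \<le> 0"
  proof (rule field_le_epsilon)
    fix e :: real assume "e > 0"
    have "b - a + 1 > 0" using ab by simp
    then show "g b - g a \<le> 0 + e" using main[of "e / (b - a + 1)"] \<open>e > 0\<close> by simp
  qed
  then show ?thesis by simp
qed


lemma ac_cont:
  assumes ac: "abs_cont_on a b g"
  shows "continuous_on {a..b} g"
  unfolding continuous_on_iff
proof (intro ballI allI impI)
  fix x e :: real assume x: "x \<in> {a..b}" and e: "e > 0"
  obtain \<delta> where "\<delta> > 0" and h: "\<forall>(n::nat) s t. (\<forall>i<n. a \<le> s i \<and> s i \<le> t i \<and> t i \<le> b) \<and>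
        (\<forall>i<n. \<forall>j<n. i \<noteq> j \<longrightarrow> t i \<le> s j \<or> t j \<le> s i) \<and>
        (\<Sum>i<n. t i - s i) < \<delta> \<longrightarrow> (\<Sum>i<n. \<bar>g (t i) - g (s i)\<bar>) < e"
    using ac e unfolding abs_cont_on_def by blast
  show "\<exists>d>0. \<forall>x'\<in>{a..b}. dist x' x < d \<longrightarrow> dist (g x') (g x) < e"
  proof (intro exI[of _ \<delta>] conjI ballI impI)
    fix x' assume x': "x' \<in> {a..b}" "dist x' x < \<delta>"
    have 1: "\<forall>i<1. a \<le> min x x' \<and> min x x' \<le> max x x' \<and> max x x' \<le> b" using x x' by auto
    have 2: "\<forall>i<(1::nat). \<forall>j<1. i \<noteq> j \<longrightarrow> max x x' \<le> min x x' \<or> max x x' \<le> min x x'" by auto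
    have 3: "(\<Sum>i<(1::nat). max x x' - min x x') < \<delta>" using x' by (cases "x \<le> x'") (auto simp: dist_real_def)
    have "(\<Sum>i<(1::nat). \<bar>g (max x x') - g (min x x')\<bar>) < e"
      using h[rule_format, of 1 "\<lambda>_. min x x'" "\<lambda>_. max x x'"] 1 2 3 by blast
    then show "dist (g x') (g x) < e" by (simp add: dist_real_def max_def min_def abs_minus_commute split: if_splits)
  qed (use \<open>\<delta>>0\<close> in simp)
qed

lemma ac_bounded:
  assumes ac: "abs_cont_on a b g"
  obtains B where "\<And>x. x \<in> {a..b} \<Longrightarrow> \<bar>g x\<bar> \<le> B"
proof -
  have "compact (g ` {a..b})" by (rule compact_continuous_image[OF ac_cont[OF ac]]) simp
  then obtain B where "\<forall>y\<in>g ` {a..b}. norm y \<le> B" using compact_imp_bounded bounded_iff by metis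
  then show ?thesis by (intro that) auto
qed

lemma sq_diff_bound:
  fixes p q C :: real
  assumes "\<bar>p\<bar> \<le> C" "\<bar>q\<bar> \<le> C"
  shows "\<bar>p^2 - q^2\<bar> \<le> 2 * C * \<bar>p - q\<bar>"
proof -
  have "p^2 - q^2 = (p - q) * (p + q)" by (simp add: power2_eq_square algebra_simps)
  then have "\<bar>p^2 - q^2\<bar> = \<bar>p - q\<bar> * \<bar>p + q\<bar>" by (simp add: abs_mult)
  also have "\<dots> \<le> \<bar>p - q\<bar> * (2 * C)" using assms by (intro mult_left_mono) auto
  finally show ?thesis by (simp add: algebra_simps)
qed

lemma ac_sqdiff:
  assumes ac1: "abs_cont_on a b z1" and ac2: "abs_cont_on a b z2"
  shows "abs_cont_on a b (\<lambda>x. (z1 x - z2 x)^2)"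
proof -
  obtain B1 where B1: "\<And>x. x \<in> {a..b} \<Longrightarrow> \<bar>z1 x\<bar> \<le> B1" using ac_bounded[OF ac1] by blast
  obtain B2 where B2: "\<And>x. x \<in> {a..b} \<Longrightarrow> \<bar>z2 x\<bar> \<le> B2" using ac_bounded[OF ac2] by blast
  define C where "C = \<bar>B1\<bar> + \<bar>B2\<bar>"
  define M where "M = 2 * C + 1"
  have M: "M > 0" by (simp add: M_def C_def)
  have termb: "\<bar>(z1 y - z2 y)^2 - (z1 x - z2 x)^2\<bar> \<le> M * (\<bar>z1 y - z1 x\<bar> + \<bar>z2 y - z2 x\<bar>)"
    if "x \<in> {a..b}" "y \<in> {a..b}" for x y
  proof -
    have b: "\<bar>z1 y - z2 y\<bar> \<le> C" "\<bar>z1 x - z2 x\<bar> \<le> C"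
      using B1[OF that(1)] B1[OF that(2)] B2[OF that(1)] B2[OF that(2)] by (auto simp: C_def)
    have "\<bar>(z1 y - z2 y)^2 - (z1 x - z2 x)^2\<bar> \<le> 2 * C * \<bar>(z1 y - z2 y) - (z1 x - z2 x)\<bar>"
      by (rule sq_diff_bound[OF b])
    also have "\<dots> \<le> 2 * C * (\<bar>z1 y - z1 x\<bar> + \<bar>z2 y - z2 x\<bar>)"
      by (intro mult_left_mono) (auto simp: C_def)
    also have "\<dots> \<le> M * (\<bar>z1 y - z1 x\<bar> + \<bar>z2 y - z2 x\<bar>)"
      by (intro mult_right_mono) (auto simp: M_def)
    finally show ?thesis .
  qed
  show ?thesis
    unfolding abs_cont_on_def
  proof (intro allI impI)
    fix e :: real assume e: "e > 0"
    then have e2: "e / (2 * M) > 0" using M by simp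
    obtain d1 where "d1 > 0" and h1: "\<forall>(n::nat) s t. (\<forall>i<n. a \<le> s i \<and> s i \<le> t i \<and> t i \<le> b) \<and>
        (\<forall>i<n. \<forall>j<n. i \<noteq> j \<longrightarrow> t i \<le> s j \<or> t j \<le> s i) \<and>
        (\<Sum>i<n. t i - s i) < d1 \<longrightarrow> (\<Sum>i<n. \<bar>z1 (t i) - z1 (s i)\<bar>) < e / (2 * M)"
      using ac1 e2 unfolding abs_cont_on_def by blast
    obtain d2 where "d2 > 0" and h2: "\<forall>(n::nat) s t. (\<forall>i<n. a \<le> s i \<and> s i \<le> t i \<and> t i \<le> b) \<and>
        (\<forall>i<n. \<forall>j<n. i \<noteq> j \<longrightarrow> t i \<le> s j \<or> t j \<le> s i) \<and>
        (\<Sum>i<n. t i - s i) < d2 \<longrightarrow> (\<Sum>i<n. \<bar>z2 (t i) - z2 (s i)\<bar>) < e / (2 * M)"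
      using ac2 e2 unfolding abs_cont_on_def by blast
    show "\<exists>\<delta>>0. \<forall>(n::nat) s t. (\<forall>i<n. a \<le> s i \<and> s i \<le> t i \<and> t i \<le> b) \<and>
        (\<forall>i<n. \<forall>j<n. i \<noteq> j \<longrightarrow> t i \<le> s j \<or> t j \<le> s i) \<and>
        (\<Sum>i<n. t i - s i) < \<delta> \<longrightarrow> (\<Sum>i<n. \<bar>(z1 (t i) - z2 (t i))^2 - (z1 (s i) - z2 (s i))^2\<bar>) < e"
    proof (intro exI[of _ "min d1 d2"] conjI allI impI)
      show "min d1 d2 > 0" using \<open>d1 > 0\<close> \<open>d2 > 0\<close> by simp
      fix n :: nat and s t
      assume H: "(\<forall>i<n. a \<le> s i \<and> s i \<le> t i \<and> t i \<le> b) \<and>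
        (\<forall>i<n. \<forall>j<n. i \<noteq> j \<longrightarrow> t i \<le> s j \<or> t j \<le> s i) \<and> (\<Sum>i<n. t i - s i) < min d1 d2"
      have S1: "(\<Sum>i<n. \<bar>z1 (t i) - z1 (s i)\<bar>) < e / (2 * M)" using h1 H by auto
      have S2: "(\<Sum>i<n. \<bar>z2 (t i) - z2 (s i)\<bar>) < e / (2 * M)" using h2 H by auto
      have "(\<Sum>i<n. \<bar>(z1 (t i) - z2 (t i))^2 - (z1 (s i) - z2 (s i))^2\<bar>)
            \<le> (\<Sum>i<n. M * (\<bar>z1 (t i) - z1 (s i)\<bar> + \<bar>z2 (t i) - z2 (s i)\<bar>))"
        using H by (intro sum_mono termb) auto
      also have "\<dots> = M * ((\<Sum>i<n. \<bar>z1 (t i) - z1 (s i)\<bar>) + (\<Sum>i<n. \<bar>z2 (t i) - z2 (s i)\<bar>))"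
        by (simp only: sum_distrib_left[symmetric] sum.distrib[symmetric])
      also have "\<dots> < M * (e / (2 * M) + e / (2 * M))"
        using S1 S2 M by (intro mult_strict_left_mono) auto
      also have "\<dots> = e" using M by (simp add: field_simps)
      finally show "(\<Sum>i<n. \<bar>(z1 (t i) - z2 (t i))^2 - (z1 (s i) - z2 (s i))^2\<bar>) < e" .
    qed
  qed
qed

lemma queue_unique:
  assumes q1: "is_queue c g z1" and q2: "is_queue c g z2" and t: "0 \<le> t"
  shows "z1 t = z2 t"
proof -
  define Q1 where "Q1 \<theta> \<longleftrightarrow> (0 < \<theta> \<longrightarrow>
        ((z1 \<theta> > 0 \<longrightarrow> (z1 has_real_derivative (g \<theta> - c)) (at \<theta>)) \<and>
         (z1 \<theta> = 0 \<longrightarrow> (z1 has_real_derivative (max (g \<theta> - c) 0)) (at \<theta>))))" for \<theta>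
  define Q2 where "Q2 \<theta> \<longleftrightarrow> (0 < \<theta> \<longrightarrow>
        ((z2 \<theta> > 0 \<longrightarrow> (z2 has_real_derivative (g \<theta> - c)) (at \<theta>)) \<and>
         (z2 \<theta> = 0 \<longrightarrow> (z2 has_real_derivative (max (g \<theta> - c) 0)) (at \<theta>))))" for \<theta>
  have z10: "z1 0 = 0" and z1nn: "\<And>\<theta>. \<theta> \<ge> 0 \<Longrightarrow> z1 \<theta> \<ge> 0" and ac1: "abs_cont_on 0 t z1"
    and ae1: "AE \<theta> in lborel. Q1 \<theta>"
    using q1 t unfolding is_queue_def Q1_def by auto
  have z20: "z2 0 = 0" and z2nn: "\<And>\<theta>. \<theta> \<ge> 0 \<Longrightarrow> z2 \<theta> \<ge> 0" and ac2: "abs_cont_on 0 t z2"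
    and ae2: "AE \<theta> in lborel. Q2 \<theta>"
    using q2 t unfolding is_queue_def Q2_def by auto
  obtain N1 where N1: "{x \<in> space lborel. \<not> Q1 x} \<subseteq> N1" "N1 \<in> null_sets lborel" using AE_E[OF ae1] null_setsI by metis
  obtain N2 where N2: "{x \<in> space lborel. \<not> Q2 x} \<subseteq> N2" "N2 \<in> null_sets lborel" using AE_E[OF ae2] null_setsI by metis
  define N where "N = N1 \<union> N2 \<union> {0}"
  have "{0::real} \<in> null_sets lborel" by (rule finite_imp_null_set_lborel) simp
  then have "N \<in> null_sets lborel" unfolding N_def using N1 N2 by (intro null_sets.Un) auto
  then have negN: "negligible N" by (simp add: negligible_iff_null_sets null_sets_completionI)
  let ?h = "\<lambda>x. (z1 x - z2 x)^2"
  have "?h t \<le> ?h 0"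
  proof (rule ac_deriv_nonpos[OF t ac_sqdiff[OF ac1 ac2] negN])
    fix x assume x: "x \<in> {0..t}" "x \<notin> N"
    then have xpos: "x > 0" and "Q1 x" "Q2 x" using N1 N2 by (auto simp: N_def)
    then have Q1x: "(z1 x > 0 \<longrightarrow> (z1 has_real_derivative (g x - c)) (at x)) \<and>
         (z1 x = 0 \<longrightarrow> (z1 has_real_derivative (max (g x - c) 0)) (at x))"
      and Q2x: "(z2 x > 0 \<longrightarrow> (z2 has_real_derivative (g x - c)) (at x)) \<and>
         (z2 x = 0 \<longrightarrow> (z2 has_real_derivative (max (g x - c) 0)) (at x))"
      unfolding Q1_def Q2_def by auto
    have nn: "z1 x \<ge> 0" "z2 x \<ge> 0" using z1nn z2nn xpos by auto
    define d1 where "d1 = (if z1 x > 0 then g x - c else max (g x - c) 0)"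
    define d2 where "d2 = (if z2 x > 0 then g x - c else max (g x - c) 0)"
    have D1: "(z1 has_real_derivative d1) (at x)" using Q1x nn by (cases "z1 x > 0") (auto simp: d1_def)
    have D2: "(z2 has_real_derivative d2) (at x)" using Q2x nn by (cases "z2 x > 0") (auto simp: d2_def)
    have "(?h has_real_derivative (2 * (z1 x - z2 x) * (d1 - d2))) (at x)"
      using DERIV_mult[OF DERIV_diff[OF D1 D2] DERIV_diff[OF D1 D2]]
      by (simp add: power2_eq_square algebra_simps)
    moreover have "2 * (z1 x - z2 x) * (d1 - d2) \<le> 0"
    proof (cases "z1 x > 0"; cases "z2 x > 0")
      assume "z1 x > 0" "z2 x > 0" then show ?thesis by (simp add: d1_def d2_def)
    next
      assume "z1 x > 0" "\<not> z2 x > 0"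
      then have "z2 x = 0" "d1 - d2 \<le> 0" using nn by (auto simp: d1_def d2_def)
      then show ?thesis using \<open>z1 x > 0\<close> by (simp add: mult_nonneg_nonpos)
    next
      assume "\<not> z1 x > 0" "z2 x > 0"
      then have "z1 x = 0" "d1 - d2 \<ge> 0" using nn by (auto simp: d1_def d2_def)
      then show ?thesis using \<open>z2 x > 0\<close> by (simp add: mult_nonpos_nonneg)
    next
      assume "\<not> z1 x > 0" "\<not> z2 x > 0"
      then show ?thesis using nn by simp
    qed
    ultimately show "\<exists>D. D \<le> 0 \<and> (?h has_real_derivative D) (at x)" by blast
  qed
  then have "(z1 t - z2 t)^2 \<le> 0" using z10 z20 by simp
  then show ?thesis by simp
qed




fun thr :: "(nat \<Rightarrow> real) \<Rightarrow> (nat \<Rightarrow> real) \<Rightarrow> real \<Rightarrow> nat \<Rightarrow> real" where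
  "thr nu tau u 0 = 0"
| "thr nu tau u (Suc 0) = 0"
| "thr nu tau u (Suc (Suc i)) = thr nu tau u (Suc i)
      + nubar nu (Suc i) / (u - nubar nu (Suc i)) * (tau (Suc (Suc i)) - tau (Suc i))"

lemma nubar_0[simp]: "nubar nu 0 = 0" by (simp add: nubar_def)
lemma nubar_Suc: "nubar nu (Suc j) = nubar nu j + nu (Suc j)"
  by (simp add: nubar_def)

locale canon =
  fixes m :: nat and nu tau :: "nat \<Rightarrow> real" and u :: real
  assumes m1: "m \<ge> 1"
    and nupos: "\<And>i. i \<in> {1..m} \<Longrightarrow> nu i > 0"
    and upos: "u > 0"
    and taumono: "\<And>i j. 1 \<le> i \<Longrightarrow> i \<le> j \<Longrightarrow> j \<le> m \<Longrightarrow> tau i \<le> tau j"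
begin

abbreviation "k \<equiv> kidx m nu u"
abbreviation "ts \<equiv> theta_star m nu tau u"
abbreviation "th \<equiv> thr nu tau u"
definition "Kp = (if k < m then Suc k else k)"
definition "sl l = (if l \<le> k then u / nubar nu l - 1 else 0)"
definition "P l \<theta> = tau l + sl l * (\<theta> - th l)"
definition "D \<theta> = Min ((\<lambda>l. P l \<theta>) ` {1..Kp})"
definition "w i \<theta> = nu i * max 0 (D \<theta> - tau i)"

lemma nubar_mono: "j \<le> j' \<Longrightarrow> j' \<le> m \<Longrightarrow> nubar nu j \<le> nubar nu j'"
proof (induction j' rule: dec_induct)
  case base then show ?case by simp
next
  case (step n) then show ?case using nupos[of "Suc n"] by (simp add: nubar_Suc)
qed

lemma nubar_strict: "j < j' \<Longrightarrow> j' \<le> m \<Longrightarrow> nubar nu j < nubar nu j'"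
proof -
  assume a: "j < j'" "j' \<le> m"
  then obtain q where q: "j' = Suc q" "j \<le> q" by (metis less_imp_Suc_add le_add1)
  have "nubar nu j \<le> nubar nu q" using nubar_mono q a by simp
  then show ?thesis using nupos[of j'] q a by (simp add: nubar_Suc)
qed

lemma nubar_pos: "1 \<le> j \<Longrightarrow> j \<le> m \<Longrightarrow> nubar nu j > 0"
  using nubar_strict[of 0 j] by simp

lemma nubar_ge1: "1 \<le> j \<Longrightarrow> j \<le> m \<Longrightarrow> nubar nu j \<ge> nu 1"
  using nubar_mono[of 1 j] by (simp add: nubar_def)

lemma k_props: "k \<le> m" "nubar nu k < u" "\<And>j. j \<le> m \<Longrightarrow> nubar nu j < u \<Longrightarrow> j \<le> k"
proof -
  have ex: "0 \<le> m \<and> nubar nu 0 < u" using upos by simp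
  have bd: "\<forall>y. y \<le> m \<and> nubar nu y < u \<longrightarrow> y \<le> m" by simp
  show "k \<le> m" "nubar nu k < u" using GreatestI_nat[of "\<lambda>j. j \<le> m \<and> nubar nu j < u", OF ex] bd
    by (auto simp: kidx_def)
  show "\<And>j. j \<le> m \<Longrightarrow> nubar nu j < u \<Longrightarrow> j \<le> k"
    using Greatest_le_nat[of "\<lambda>j. j \<le> m \<and> nubar nu j < u"] by (auto simp: kidx_def)
qed

lemma k_next: "k < m \<Longrightarrow> nubar nu (Suc k) \<ge> u"
  using k_props(3)[of "Suc k"] by fastforce

lemma le_k: "j \<le> k \<Longrightarrow> nubar nu j < u"
  using nubar_mono[of j k] k_props by simp

lemma Kp_props: "1 \<le> Kp" "Kp \<le> m" "Kp \<le> Suc k" "k \<le> Kp" "Kp \<le> k \<Longrightarrow> k = m"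
  using m1 k_props(1) by (auto simp: Kp_def split: if_splits)

lemma th_step: "1 \<le> q \<Longrightarrow> th (Suc q) = th q + nubar nu q / (u - nubar nu q) * (tau (Suc q) - tau q)"
  by (cases q) auto

lemma th_mono1: "1 \<le> j \<Longrightarrow> j < Kp \<Longrightarrow> th j \<le> th (Suc j)"
proof -
  assume a: "1 \<le> j" "j < Kp"
  then have "j \<le> k" "Suc j \<le> m" using Kp_props by auto
  then have "nubar nu j < u" "nubar nu j > 0" "tau j \<le> tau (Suc j)"
    using le_k nubar_pos a taumono[of j "Suc j"] by auto
  then show ?thesis using a by (simp add: th_step)
qed

lemma th_mono: assumes "1 \<le> j" "j \<le> j'" "j' \<le> Kp" shows "th j \<le> th j'"
  using assms(2,3)
proof (induction j' rule: dec_induct)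
  case base then show ?case by simp
next
  case (step n) then show ?case using th_mono1[of n] assms(1) by simp
qed

lemma th_nonneg: "1 \<le> j \<Longrightarrow> j \<le> Kp \<Longrightarrow> th j \<ge> 0"
  using th_mono[of 1 j] by simp

lemma ts_th: "1 \<le> j \<Longrightarrow> j \<le> Kp \<Longrightarrow> ts j = ereal (th j)"
proof (induction j rule: nat_induct_at_least)
  case base then show ?case by simp
next
  case (Suc n)
  then have "n \<le> k" "Suc n \<le> m" using Kp_props by auto
  then have c: "n \<le> m - 1 \<and> nubar nu n < u" using le_k by auto
  obtain q where q: "n = Suc q" using Suc by (cases n) auto
  show ?case using Suc c by (simp add: q)
qed

lemma ts_top: "k = m \<Longrightarrow> ts (Suc k) = \<infinity>"
proof -
  assume "k = m"
  then obtain q where q: "k = Suc q" using m1 by (cases k) auto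
  then show ?thesis using \<open>k = m\<close> by simp
qed

lemma ts_mono: "1 \<le> j \<Longrightarrow> j \<le> j' \<Longrightarrow> j' \<le> Suc k \<Longrightarrow> ts j \<le> ts j'"
proof (cases "j' \<le> Kp")
  case True
  assume "1 \<le> j" "j \<le> j'"
  then show ?thesis using True ts_th[of j] ts_th[of j'] th_mono[of j j'] by simp
next
  case False
  assume "j' \<le> Suc k"
  then have "j' = Suc k" "k = m" using False Kp_props by (auto simp: Kp_def split: if_splits)
  then show ?thesis using ts_top by simp
qed

lemma sl_pos: "1 \<le> l \<Longrightarrow> l \<le> k \<Longrightarrow> sl l > 0"
proof -
  assume a: "1 \<le> l" "l \<le> k"
  then have "nubar nu l < u" "nubar nu l > 0" using le_k nubar_pos k_props by auto
  then show ?thesis using a by (simp add: sl_def field_simps)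
qed

lemma sl_nonneg: "1 \<le> l \<Longrightarrow> sl l \<ge> 0"
  using sl_pos[of l] by (cases "l \<le> k") (auto simp: sl_def)

lemma sl_bound: "1 \<le> l \<Longrightarrow> l \<le> m \<Longrightarrow> sl l \<le> u / nu 1"
proof (cases "l \<le> k")
  case True
  assume a: "1 \<le> l" "l \<le> m"
  have "nu 1 > 0" using nupos m1 by auto
  then have "u / nubar nu l \<le> u / nu 1" using nubar_ge1[OF a] upos
    by (intro divide_left_mono) auto
  then show ?thesis using True by (simp add: sl_def)
next
  case False
  then show ?thesis using nupos[of 1] m1 upos by (simp add: sl_def)
qed

lemma P_alt: "1 \<le> q \<Longrightarrow> q \<le> k \<Longrightarrow> P q \<theta> = tau (Suc q) + sl q * (\<theta> - th (Suc q))"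
proof -
  assume a: "1 \<le> q" "q \<le> k"
  then have "nubar nu q < u" "nubar nu q > 0" using le_k nubar_pos k_props by auto
  then show ?thesis using a
    by (simp add: P_def sl_def th_step field_simps)
qed

lemma sl_dec: "1 \<le> q \<Longrightarrow> Suc q \<le> Kp \<Longrightarrow> sl (Suc q) < sl q"
proof -
  assume a: "1 \<le> q" "Suc q \<le> Kp"
  then have qk: "q \<le> k" using Kp_props by simp
  show ?thesis
  proof (cases "Suc q \<le> k")
    case True
    then have "nubar nu q < nubar nu (Suc q)" "nubar nu q > 0"
      using nubar_strict[of q "Suc q"] nubar_pos[of q] a k_props by auto
    then have "u / nubar nu (Suc q) < u / nubar nu q" using upos by (simp add: divide_strict_left_mono)
    then show ?thesis using True by (simp add: sl_def)
  next
    case False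
    then show ?thesis using sl_pos[OF a(1) qk] by (simp add: sl_def)
  qed
qed

lemma P_diff: "1 \<le> q \<Longrightarrow> Suc q \<le> Kp \<Longrightarrow> P q \<theta> - P (Suc q) \<theta> = (sl q - sl (Suc q)) * (\<theta> - th (Suc q))"
  using P_alt[of q \<theta>] Kp_props by (simp add: P_def algebra_simps)

lemma adj_ge: "1 \<le> q \<Longrightarrow> Suc q \<le> Kp \<Longrightarrow> th (Suc q) \<le> \<theta> \<Longrightarrow> P (Suc q) \<theta> \<le> P q \<theta>"
  using P_diff[of q \<theta>] sl_dec[of q] by (smt (verit) mult_nonneg_nonneg)

lemma adj_le: "1 \<le> q \<Longrightarrow> Suc q \<le> Kp \<Longrightarrow> \<theta> \<le> th (Suc q) \<Longrightarrow> P q \<theta> \<le> P (Suc q) \<theta>"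
  using P_diff[of q \<theta>] sl_dec[of q] by (smt (verit) mult_nonneg_nonpos)

lemma chain:
  assumes j: "1 \<le> j" "j \<le> Kp" and lo: "th j \<le> \<theta>" and hi: "Suc j \<le> Kp \<Longrightarrow> \<theta> \<le> th (Suc j)"
    and l: "1 \<le> l" "l \<le> Kp"
  shows "P j \<theta> \<le> P l \<theta>"
proof (cases "j \<le> l")
  case True
  have "\<forall>l. j \<le> l \<longrightarrow> l \<le> Kp \<longrightarrow> P j \<theta> \<le> P l \<theta>"
  proof (intro allI impI)
    fix l assume "j \<le> l" "l \<le> Kp"
    then show "P j \<theta> \<le> P l \<theta>"
    proof (induction l rule: dec_induct)
      case base then show ?case by simp
    next
      case (step n)
      have "th (Suc j) \<le> th (Suc n)" using th_mono[of "Suc j" "Suc n"] step j by simp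
      then have "\<theta> \<le> th (Suc n)" using hi step by simp
      then show ?case using adj_le[of n \<theta>] step j by simp
    qed
  qed
  then show ?thesis using True l by blast
next
  case False
  have "\<forall>d. d \<le> j - l \<longrightarrow> P j \<theta> \<le> P (j - d) \<theta>"
  proof (intro allI impI)
    fix d assume "d \<le> j - l"
    then show "P j \<theta> \<le> P (j - d) \<theta>"
    proof (induction d)
      case 0 then show ?case by simp
    next
      case (Suc d)
      let ?q = "j - Suc d"
      have q: "1 \<le> ?q" "Suc ?q = j - d" "Suc ?q \<le> Kp" using Suc.prems l False j by auto
      have "th (Suc ?q) \<le> th j" using th_mono[of "Suc ?q" j] q j by simp
      then have "P (Suc ?q) \<theta> \<le> P ?q \<theta>" using adj_ge[OF q(1) q(3)] lo by simp
      then show ?case using Suc q by simp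
    qed
  qed
  then show ?thesis using False by (metis diff_diff_cancel le_refl nat_le_linear)
qed

lemma D_eq: "1 \<le> j \<Longrightarrow> j \<le> Kp \<Longrightarrow> th j \<le> \<theta> \<Longrightarrow> (Suc j \<le> Kp \<Longrightarrow> \<theta> \<le> th (Suc j)) \<Longrightarrow> D \<theta> = P j \<theta>"
  unfolding D_def
  by (rule Min_eqI) (auto intro: chain)

lemma D_attain: "\<exists>l\<in>{1..Kp}. D \<theta> = P l \<theta>"
proof -
  have "D \<theta> \<in> (\<lambda>l. P l \<theta>) ` {1..Kp}" unfolding D_def using Kp_props by (intro Min_in) auto
  then show ?thesis by auto
qed

lemma D_le: "l \<in> {1..Kp} \<Longrightarrow> D \<theta> \<le> P l \<theta>"
  unfolding D_def by (rule Min_le) auto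

lemma D_mono: "\<theta> \<le> \<theta>' \<Longrightarrow> D \<theta> \<le> D \<theta>'"
proof -
  assume a: "\<theta> \<le> \<theta>'"
  obtain l where l: "l \<in> {1..Kp}" "D \<theta>' = P l \<theta>'" using D_attain by blast
  have "P l \<theta> \<le> P l \<theta>'" using sl_nonneg[of l] l a by (simp add: P_def mult_left_mono)
  then show ?thesis using D_le[OF l(1), of \<theta>] l by simp
qed

lemma D_lip: "\<theta> \<le> \<theta>' \<Longrightarrow> D \<theta>' \<le> D \<theta> + u / nu 1 * (\<theta>' - \<theta>)"
proof -
  assume a: "\<theta> \<le> \<theta>'"
  obtain l where l: "l \<in> {1..Kp}" "D \<theta> = P l \<theta>" using D_attain by blast
  have "sl l \<le> u / nu 1" using sl_bound[of l] l Kp_props by auto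
  then have "sl l * (\<theta>' - \<theta>) \<le> u / nu 1 * (\<theta>' - \<theta>)" using a by (intro mult_right_mono) auto
  then have "P l \<theta>' \<le> P l \<theta> + u / nu 1 * (\<theta>' - \<theta>)"
    by (simp add: P_def algebra_simps)
  then show ?thesis using D_le[OF l(1), of \<theta>'] l by simp
qed

lemma D_lip_abs: "\<bar>D x - D y\<bar> \<le> u / nu 1 * \<bar>x - y\<bar>"
  using D_lip[of x y] D_lip[of y x] D_mono[of x y] D_mono[of y x]
  by (cases "x \<le> y") (auto simp: abs_if algebra_simps)

lemma D_0: "D 0 = tau 1"
proof -
  have "th 1 \<le> 0" by simp
  moreover have "0 \<le> th (Suc 1)" if "Suc 1 \<le> Kp" by (rule th_nonneg) (use that in auto)
  ultimately have "D 0 = P 1 0" using D_eq[of 1 0] Kp_props by simp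
  then show ?thesis by (simp add: P_def)
qed

lemma D_ge_tau1: "0 \<le> \<theta> \<Longrightarrow> tau 1 \<le> D \<theta>"
  using D_mono[of 0 \<theta>] D_0 by simp


lemma cf: "canonical_flow m nu tau u i \<theta> =
   (if 1 \<le> i \<and> i \<le> k \<and> (\<exists>j\<in>{i..k}. ts j \<le> ereal \<theta> \<and> ereal \<theta> < ts (Suc j))
      then u / nubar nu (THE j. j \<in> {i..k} \<and> ts j \<le> ereal \<theta> \<and> ereal \<theta> < ts (Suc j)) * nu i
    else if 1 \<le> i \<and> i \<le> k \<and> ts (Suc k) \<le> ereal \<theta> then nu i
    else if i = Suc k \<and> k < m \<and> ts (Suc k) \<le> ereal \<theta> then u - nubar nu k
    else 0)"
  by (simp add: canonical_flow_def Let_def)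

definition "ph j \<theta> \<longleftrightarrow> ts j \<le> ereal \<theta> \<and> ereal \<theta> < ts (Suc j)"
definition "st \<theta> \<longleftrightarrow> k < m \<and> ts (Suc k) \<le> ereal \<theta>"

lemma ph_lt: "1 \<le> j \<Longrightarrow> j < j' \<Longrightarrow> j' \<le> k \<Longrightarrow> ph j \<theta> \<Longrightarrow> ph j' \<theta> \<Longrightarrow> False"
proof -
  assume a: "1 \<le> j" "j < j'" "j' \<le> k" "ph j \<theta>" "ph j' \<theta>"
  have "ts (Suc j) \<le> ts j'" using ts_mono[of "Suc j" j'] a by simp
  then show False using a by (auto simp: ph_def)
qed

lemma ph_unique: "j \<in> {1..k} \<Longrightarrow> j' \<in> {1..k} \<Longrightarrow> ph j \<theta> \<Longrightarrow> ph j' \<theta> \<Longrightarrow> j = j'"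
  using ph_lt[of j j' \<theta>] ph_lt[of j' j \<theta>] by (cases j j' rule: linorder_cases) auto

lemma ph_not_st: "j \<in> {1..k} \<Longrightarrow> ph j \<theta> \<Longrightarrow> \<not> st \<theta>"
proof
  assume a: "j \<in> {1..k}" "ph j \<theta>" "st \<theta>"
  have "ts (Suc j) \<le> ts (Suc k)" using ts_mono[of "Suc j" "Suc k"] a by simp
  then show False using a by (auto simp: ph_def st_def)
qed

lemma ph_iff: "j \<in> {1..k} \<Longrightarrow> ph j \<theta> \<longleftrightarrow> th j \<le> \<theta> \<and> (Suc j \<le> Kp \<longrightarrow> \<theta> < th (Suc j))"
proof -
  assume j: "j \<in> {1..k}"
  then have tsj: "ts j = ereal (th j)" using ts_th[of j] Kp_props by auto
  show ?thesis
  proof (cases "Suc j \<le> Kp")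
    case True
    then have "ts (Suc j) = ereal (th (Suc j))" using ts_th[of "Suc j"] by simp
    then show ?thesis using tsj True by (simp add: ph_def)
  next
    case False
    then have "j = k" "k = m" using j Kp_props by (auto simp: Kp_def split: if_splits)
    then have "ts (Suc j) = \<infinity>" using ts_top by simp
    then show ?thesis using tsj False by (simp add: ph_def)
  qed
qed

lemma st_iff: "st \<theta> \<longleftrightarrow> k < m \<and> th (Suc k) \<le> \<theta>"
proof (cases "k < m")
  case True
  then have "Suc k \<le> Kp" by (simp add: Kp_def)
  then have "ts (Suc k) = ereal (th (Suc k))" using ts_th[of "Suc k"] by simp
  then show ?thesis using True by (simp add: st_def)
qed (simp add: st_def)

lemma classify: "0 \<le> \<theta> \<Longrightarrow> (\<exists>j\<in>{1..k}. ph j \<theta>) \<or> st \<theta>"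
proof (rule disjCI)
  assume t: "0 \<le> \<theta>" and nst: "\<not> st \<theta>"
  have lt: "ereal \<theta> < ts (Suc k)"
  proof (cases "k < m")
    case True then show ?thesis using nst by (auto simp: st_def)
  next
    case False then show ?thesis using ts_top k_props by simp
  qed
  have k1: "1 \<le> k"
  proof (rule ccontr)
    assume "\<not> 1 \<le> k"
    then have "k = 0" by simp
    then show False using lt t by simp
  qed
  let ?P = "\<lambda>j. j \<in> {1..k} \<and> ts j \<le> ereal \<theta>"
  have ex: "?P 1" using k1 t by simp
  have bd: "\<forall>y. ?P y \<longrightarrow> y \<le> k" by simp
  define j where "j = (GREATEST j. ?P j)"
  have Pj: "?P j" unfolding j_def by (rule GreatestI_nat[where P="?P" and k=1 and b=k, OF ex]) simp
  have "ereal \<theta> < ts (Suc j)"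
  proof (cases "j = k")
    case True then show ?thesis using lt by simp
  next
    case False
    then have "Suc j \<in> {1..k}" using Pj by auto
    moreover have "\<not> ?P (Suc j)"
    proof
      assume "?P (Suc j)"
      then have "Suc j \<le> j" unfolding j_def by (rule Greatest_le_nat[where P="?P" and b=k]) simp
      then show False by simp
    qed
    ultimately show ?thesis by auto
  qed
  then show "\<exists>j\<in>{1..k}. ph j \<theta>" using Pj by (auto simp: ph_def)
qed

lemma f_ph_le: "j \<in> {1..k} \<Longrightarrow> ph j \<theta> \<Longrightarrow> 1 \<le> i \<Longrightarrow> i \<le> j \<Longrightarrow> canonical_flow m nu tau u i \<theta> = u / nubar nu j * nu i"
proof -
  assume a: "j \<in> {1..k}" "ph j \<theta>" "1 \<le> i" "i \<le> j"
  have ex: "\<exists>j\<in>{i..k}. ts j \<le> ereal \<theta> \<and> ereal \<theta> < ts (Suc j)" using a by (auto simp: ph_def)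
  have the: "(THE j. j \<in> {i..k} \<and> ts j \<le> ereal \<theta> \<and> ereal \<theta> < ts (Suc j)) = j"
  proof (rule the_equality)
    show "j \<in> {i..k} \<and> ts j \<le> ereal \<theta> \<and> ereal \<theta> < ts (Suc j)" using a by (auto simp: ph_def)
    fix j' assume "j' \<in> {i..k} \<and> ts j' \<le> ereal \<theta> \<and> ereal \<theta> < ts (Suc j')"
    then show "j' = j" using ph_unique[of j' j \<theta>] a by (auto simp: ph_def)
  qed
  show ?thesis using a ex the by (subst cf) auto
qed

lemma f_ph_gt: "j \<in> {1..k} \<Longrightarrow> ph j \<theta> \<Longrightarrow> j < i \<Longrightarrow> canonical_flow m nu tau u i \<theta> = 0"
proof -
  assume a: "j \<in> {1..k}" "ph j \<theta>" "j < i"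
  have n1: "\<not> (\<exists>j'\<in>{i..k}. ts j' \<le> ereal \<theta> \<and> ereal \<theta> < ts (Suc j'))"
  proof
    assume "\<exists>j'\<in>{i..k}. ts j' \<le> ereal \<theta> \<and> ereal \<theta> < ts (Suc j')"
    then obtain j' where "j' \<in> {i..k}" "ph j' \<theta>" by (auto simp: ph_def)
    then show False using ph_unique[of j j' \<theta>] a by auto
  qed
  have n2: "\<not> ts (Suc k) \<le> ereal \<theta>" using ph_not_st[OF a(1,2)] a
  proof -
    have "ts (Suc j) \<le> ts (Suc k)" using ts_mono[of "Suc j" "Suc k"] a by simp
    then show ?thesis using a by (auto simp: ph_def)
  qed
  show ?thesis using n1 n2 by (subst cf) auto
qed

lemma f_st_le: "st \<theta> \<Longrightarrow> 1 \<le> i \<Longrightarrow> i \<le> k \<Longrightarrow> canonical_flow m nu tau u i \<theta> = nu i"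
proof -
  assume a: "st \<theta>" "1 \<le> i" "i \<le> k"
  have n1: "\<not> (\<exists>j'\<in>{i..k}. ts j' \<le> ereal \<theta> \<and> ereal \<theta> < ts (Suc j'))"
  proof
    assume "\<exists>j'\<in>{i..k}. ts j' \<le> ereal \<theta> \<and> ereal \<theta> < ts (Suc j')"
    then obtain j' where "j' \<in> {i..k}" "ph j' \<theta>" by (auto simp: ph_def)
    then show False using ph_not_st[of j' \<theta>] a by auto
  qed
  show ?thesis using n1 a by (subst cf) (auto simp: st_def)
qed

lemma f_st_k: "st \<theta> \<Longrightarrow> canonical_flow m nu tau u (Suc k) \<theta> = u - nubar nu k"
  by (subst cf) (auto simp: st_def)

lemma f_st_gt: "Suc k < i \<Longrightarrow> canonical_flow m nu tau u i \<theta> = 0"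
  by (subst cf) auto

lemma D_ph: "j \<in> {1..k} \<Longrightarrow> ph j \<theta> \<Longrightarrow> D \<theta> = P j \<theta>"
  using ph_iff[of j \<theta>] Kp_props by (intro D_eq) auto

lemma D_st: "st \<theta> \<Longrightarrow> D \<theta> = tau (Suc k)"
proof -
  assume a: "st \<theta>"
  then have "k < m" "th (Suc k) \<le> \<theta>" using st_iff by auto
  then have "Kp = Suc k" by (simp add: Kp_def)
  then have "D \<theta> = P (Suc k) \<theta>" using \<open>th (Suc k) \<le> \<theta>\<close> by (intro D_eq) auto
  then show ?thesis by (simp add: P_def sl_def)
qed

lemma f_pos_tau: "0 \<le> \<theta> \<Longrightarrow> i \<in> {1..m} \<Longrightarrow> canonical_flow m nu tau u i \<theta> > 0 \<Longrightarrow> tau i \<le> D \<theta>"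
proof -
  assume a: "0 \<le> \<theta>" "i \<in> {1..m}" "canonical_flow m nu tau u i \<theta> > 0"
  from classify[OF a(1)] show ?thesis
  proof
    assume "\<exists>j\<in>{1..k}. ph j \<theta>"
    then obtain j where j: "j \<in> {1..k}" "ph j \<theta>" by blast
    have "i \<le> j" using f_ph_gt[OF j, of i] a by (cases "j < i") auto
    then have "tau i \<le> tau j" using taumono[of i j] a j k_props by auto
    moreover have "tau j \<le> P j \<theta>" using sl_nonneg[of j] j ph_iff[of j \<theta>]
      by (auto simp: P_def)
    ultimately show ?thesis using D_ph[OF j] by simp
  next
    assume s: "st \<theta>"
    have "i \<le> Suc k" using f_st_gt[of i \<theta>] a by (cases "Suc k < i") auto
    then have "tau i \<le> tau (Suc k)" using taumono[of i "Suc k"] a s by (auto simp: st_def)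
    then show ?thesis using D_st[OF s] by simp
  qed
qed

lemma f1_pos: "0 \<le> \<theta> \<Longrightarrow> canonical_flow m nu tau u 1 \<theta> > 0"
proof -
  assume a: "0 \<le> \<theta>"
  have nu1: "nu 1 > 0" using nupos m1 by auto
  from classify[OF a] show ?thesis
  proof
    assume "\<exists>j\<in>{1..k}. ph j \<theta>"
    then obtain j where j: "j \<in> {1..k}" "ph j \<theta>" by blast
    have "nubar nu j > 0" using nubar_pos[of j] j k_props by auto
    then show ?thesis using f_ph_le[OF j, of 1] j nu1 upos by simp
  next
    assume s: "st \<theta>"
    show ?thesis
    proof (cases "k = 0")
      case True
      then show ?thesis using f_st_k[OF s] upos by simp
    next
      case False
      then show ?thesis using f_st_le[OF s, of 1] nu1 by simp
    qed
  qed
qed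


lemma w_deriv:
  assumes tpos: "\<theta> > 0" and nb: "\<theta> \<notin> th ` {1..Suc k}" and i: "i \<in> {1..m}"
  shows "(w i \<theta> > 0 \<longrightarrow> (w i has_real_derivative (canonical_flow m nu tau u i \<theta> - nu i)) (at \<theta>)) \<and>
         (w i \<theta> = 0 \<longrightarrow> (w i has_real_derivative (max (canonical_flow m nu tau u i \<theta> - nu i) 0)) (at \<theta>))"
proof -
  have nui: "nu i > 0" using nupos i by simp
  have "(\<exists>j\<in>{1..k}. ph j \<theta>) \<or> st \<theta>" using classify[of \<theta>] tpos by simp
  then show ?thesis
  proof (elim disjE)
    assume "\<exists>j\<in>{1..k}. ph j \<theta>"
    then obtain j where j: "j \<in> {1..k}" "ph j \<theta>" by blast
    have jSk: "j \<in> {1..Suc k}" using j by auto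
    have thj: "th j < \<theta>" using ph_iff[OF j(1)] j(2) nb jSk by (metis image_eqI order_le_less)
    have hi: "Suc j \<le> Kp \<Longrightarrow> \<theta> < th (Suc j)" using ph_iff[OF j(1)] j(2) by blast
    define Ob where "Ob = (if Suc j \<le> Kp then {th j<..<th (Suc j)} else {th j<..})"
    have Oo: "open Ob" by (simp add: Ob_def)
    have tO: "\<theta> \<in> Ob" using thj hi by (auto simp: Ob_def)
    have Oph: "ph j y" if "y \<in> Ob" for y
      using that ph_iff[OF j(1), of y] by (auto simp: Ob_def split: if_splits)
    have DO: "D y = P j y" if "y \<in> Ob" for y using D_ph[OF j(1) Oph[OF that]] .
    have jk: "1 \<le> j" "j \<le> k" using j by auto
    show ?thesis
    proof (cases "i \<le> j")
      case True
      have slj: "sl j > 0" using sl_pos jk by simp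
      have tij: "tau i \<le> tau j" using taumono[of i j] True i jk k_props by auto
      have eqO: "nu i * (P j y - tau i) = w i y" if "y \<in> Ob" for y
      proof -
        have "th j < y" using that by (auto simp: Ob_def split: if_splits)
        then have "P j y > tau j" using slj by (simp add: P_def)
        then show ?thesis using DO[OF that] tij by (simp add: w_def)
      qed
      have "((\<lambda>y. nu i * (P j y - tau i)) has_real_derivative nu i * sl j) (at \<theta>)"
        unfolding P_def by (auto intro!: derivative_eq_intros)
      then have der: "(w i has_real_derivative nu i * sl j) (at \<theta>)"
        by (rule has_field_derivative_transform_within_open[OF _ Oo tO eqO])
      have "canonical_flow m nu tau u i \<theta> = u / nubar nu j * nu i"
        using f_ph_le[OF j(1) j(2)] True i by simp
      then have "canonical_flow m nu tau u i \<theta> - nu i = nu i * sl j" using jk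
        by (simp add: sl_def algebra_simps)
      moreover have "w i \<theta> > 0"
      proof -
        have "sl j * (\<theta> - th j) > 0" using slj thj by simp
        then have "P j \<theta> - tau i > 0" using tij by (simp add: P_def)
        then show ?thesis using eqO[OF tO, symmetric] nui by simp
      qed
      ultimately show ?thesis using der by simp
    next
      case False
      have Sj: "Suc j \<le> Kp"
      proof (cases "j < k")
        case True then show ?thesis using Kp_props by simp
      next
        case False
        then have "j = k" using jk by simp
        then have "k < m" using \<open>\<not> i \<le> j\<close> i by simp
        then show ?thesis using \<open>j = k\<close> by (simp add: Kp_def)
      qed
      have slj: "sl j > 0" using sl_pos jk by simp
      have tij: "tau (Suc j) \<le> tau i" using taumono[of "Suc j" i] False i by auto
      have eqO: "0 = w i y" if "y \<in> Ob" for y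
      proof -
        have "y < th (Suc j)" using that Sj by (simp add: Ob_def)
        then have "P j y < tau (Suc j)" using P_alt[OF jk] slj by (simp add: mult_pos_neg)
        then show ?thesis using DO[OF that] tij by (simp add: w_def)
      qed
      have "((\<lambda>y. 0) has_real_derivative 0) (at \<theta>)" by simp
      then have der: "(w i has_real_derivative 0) (at \<theta>)"
        by (rule has_field_derivative_transform_within_open[OF _ Oo tO eqO])
      have "canonical_flow m nu tau u i \<theta> = 0" using f_ph_gt[OF j(1) j(2)] False by simp
      then show ?thesis using der eqO[OF tO] nui by simp
    qed
  next
    assume s: "st \<theta>"
    then have km: "k < m" and le: "th (Suc k) \<le> \<theta>" using st_iff by auto
    have lt: "th (Suc k) < \<theta>" proof -
      have "Suc k \<in> {1..Suc k}" by simp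
      then have "\<theta> \<noteq> th (Suc k)" using nb by force
      then show ?thesis using le by simp
    qed
    define Ob where "Ob = {th (Suc k)<..}"
    have Oo: "open Ob" by (simp add: Ob_def)
    have tO: "\<theta> \<in> Ob" using lt by (simp add: Ob_def)
    define c where "c = nu i * max 0 (tau (Suc k) - tau i)"
    have eqO: "c = w i y" if "y \<in> Ob" for y
    proof -
      have "st y" using that km st_iff by (simp add: Ob_def)
      then show ?thesis using D_st by (simp add: w_def c_def)
    qed
    have "((\<lambda>y. c) has_real_derivative 0) (at \<theta>)" by simp
    then have der: "(w i has_real_derivative 0) (at \<theta>)"
      by (rule has_field_derivative_transform_within_open[OF _ Oo tO eqO])
    have "w i \<theta> > 0 \<Longrightarrow> canonical_flow m nu tau u i \<theta> - nu i = 0"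
    proof -
      assume "w i \<theta> > 0"
      have "tau i < tau (Suc k)"
      proof (rule ccontr)
        assume "\<not> tau i < tau (Suc k)"
        then have "c = 0" by (simp add: c_def max_def)
        then show False using eqO[OF tO] \<open>w i \<theta> > 0\<close> by simp
      qed
      then have "i \<le> k" using taumono[of "Suc k" i] km i by (cases "i \<le> k") auto
      then show ?thesis using f_st_le[OF s] i by simp
    qed
    moreover have "max (canonical_flow m nu tau u i \<theta> - nu i) 0 = 0"
    proof -
      have "canonical_flow m nu tau u i \<theta> \<le> nu i"
      proof (cases "i \<le> k")
        case True then show ?thesis using f_st_le[OF s] i by simp
      next
        case False
        show ?thesis
        proof (cases "i = Suc k")
          case True
          then show ?thesis using f_st_k[OF s] k_next[OF km] nubar_Suc[of nu k] by simp
        next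
          case False
          then have "Suc k < i" using \<open>\<not> i \<le> k\<close> by simp
          then show ?thesis using f_st_gt nui by simp
        qed
      qed
      then show ?thesis by simp
    qed
    ultimately show ?thesis using der by auto
  qed
qed

lemma w_lip: "i \<in> {1..m} \<Longrightarrow> \<bar>w i x - w i y\<bar> \<le> nu i * (u / nu 1) * \<bar>x - y\<bar>"
proof -
  assume i: "i \<in> {1..m}"
  have nui: "nu i > 0" using nupos i by simp
  have "\<bar>max 0 (D x - tau i) - max 0 (D y - tau i)\<bar> \<le> \<bar>D x - D y\<bar>" by (simp add: max_def abs_if)
  also have "\<dots> \<le> u / nu 1 * \<bar>x - y\<bar>" by (rule D_lip_abs)
  finally have "nu i * \<bar>max 0 (D x - tau i) - max 0 (D y - tau i)\<bar> \<le> nu i * (u / nu 1 * \<bar>x - y\<bar>)"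
    using nui by (intro mult_left_mono) auto
  then show ?thesis using nui by (simp add: w_def abs_mult right_diff_distrib[symmetric] mult.assoc)
qed

end


lemma lipschitz_ac:
  fixes g :: "real \<Rightarrow> real"
  assumes C: "C \<ge> 0" and L: "\<And>x y. \<bar>g x - g y\<bar> \<le> C * \<bar>x - y\<bar>"
  shows "abs_cont_on a b g"
  unfolding abs_cont_on_def
proof (intro allI impI)
  fix e :: real assume e: "e > 0"
  show "\<exists>\<delta>>0. \<forall>(n::nat) s t. (\<forall>i<n. a \<le> s i \<and> s i \<le> t i \<and> t i \<le> b) \<and>
        (\<forall>i<n. \<forall>j<n. i \<noteq> j \<longrightarrow> t i \<le> s j \<or> t j \<le> s i) \<and>
        (\<Sum>i<n. t i - s i) < \<delta> \<longrightarrow> (\<Sum>i<n. \<bar>g (t i) - g (s i)\<bar>) < e"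
  proof (intro exI[of _ "e / (C + 1)"] conjI allI impI)
    show "e / (C + 1) > 0" using e C by simp
    fix n :: nat and s t
    assume H: "(\<forall>i<n. a \<le> s i \<and> s i \<le> t i \<and> t i \<le> b) \<and>
        (\<forall>i<n. \<forall>j<n. i \<noteq> j \<longrightarrow> t i \<le> s j \<or> t j \<le> s i) \<and>
        (\<Sum>i<n. t i - s i) < e / (C + 1)"
    have "(\<Sum>i<n. \<bar>g (t i) - g (s i)\<bar>) \<le> (\<Sum>i<n. C * (t i - s i))"
    proof (rule sum_mono)
      fix i assume "i \<in> {..<n}"
      then have "s i \<le> t i" using H by auto
      then show "\<bar>g (t i) - g (s i)\<bar> \<le> C * (t i - s i)" using L[of "t i" "s i"] by simp
    qed
    also have "\<dots> = C * (\<Sum>i<n. t i - s i)" by (simp add: sum_distrib_left)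
    also have "\<dots> \<le> C * (e / (C + 1))" using H C by (intro mult_left_mono) auto
    also have "\<dots> < e" using C e by (simp add: field_simps)
    finally show "(\<Sum>i<n. \<bar>g (t i) - g (s i)\<bar>) < e" .
  qed
qed

theorem mainTheorem2:
  fixes m :: nat and nu tau :: "nat \<Rightarrow> real" and u T :: real
  assumes "m \<ge> 1"
    and "\<forall>i\<in>{1..m}. nu i \<in> \<rat> \<and> nu i > 0"
    and "u \<in> \<rat>" and "u > 0"
    and "\<forall>i\<in>{1..m}. tau i \<ge> 0"
    and "\<forall>i j. 1 \<le> i \<and> i \<le> j \<and> j \<le> m \<longrightarrow> tau i \<le> tau j"
    and "T > 0"
  defines "f \<equiv> canonical_flow m nu tau u"
  shows "(\<exists>z. \<forall>i\<in>{1..m}. is_queue (nu i) (f i) (z i)) \<and>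
         (\<forall>z. (\<forall>i\<in>{1..m}. is_queue (nu i) (f i) (z i)) \<longrightarrow>
            (let S = {i\<in>{1..m}. exit_time nu tau z i T =
                        Min ((\<lambda>j. exit_time nu tau z j T) ` {1..m})}
             in makespan m nu tau f z T = ereal (Max ((\<lambda>i. exit_time nu tau z i T) ` S))))"
proof -
  interpret canon m nu tau u
    by unfold_locales (use assms in auto)
  have wq: "is_queue (nu i) (f i) (w i)" if i: "i \<in> {1..m}" for i
  proof -
    have nui: "nu i > 0" using nupos i by simp
    have t1i: "tau 1 \<le> tau i" using taumono[of 1 i] i by auto
    show ?thesis unfolding is_queue_def
    proof (intro conjI allI impI)
      show "w i 0 = 0" using D_0 t1i by (simp add: w_def)
      fix \<theta> :: real assume "0 \<le> \<theta>"
      show "0 \<le> w i \<theta>" using nui by (simp add: w_def)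
    next
      fix b :: real assume "0 \<le> b"
      show "abs_cont_on 0 b (w i)"
        by (rule lipschitz_ac[of "nu i * (u / nu 1)"]) (use nui upos nupos[of 1] m1 w_lip[OF i] in auto)
    next
      show "AE \<theta> in lborel. 0 < \<theta> \<longrightarrow>
        ((w i \<theta> > 0 \<longrightarrow> (w i has_real_derivative (f i \<theta> - nu i)) (at \<theta>)) \<and>
         (w i \<theta> = 0 \<longrightarrow> (w i has_real_derivative (max (f i \<theta> - nu i) 0)) (at \<theta>)))"
        by (rule AE_I'[OF finite_imp_null_set_lborel[of "th ` {1..Suc k}"]])
           (use w_deriv[OF _ _ i] in \<open>auto simp: f_def\<close>)
    qed
  qed
  show ?thesis
  proof (intro conjI allI impI)
    show "\<exists>z. \<forall>i\<in>{1..m}. is_queue (nu i) (f i) (z i)" using wq by blast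
    fix z assume zq: "\<forall>i\<in>{1..m}. is_queue (nu i) (f i) (z i)"
    have E: "exit_time nu tau z i \<theta> = \<theta> + max (D \<theta>) (tau i)" if i: "i \<in> {1..m}" and t: "0 \<le> \<theta>" for i \<theta>
    proof -
      have "z i \<theta> = w i \<theta>" using queue_unique[OF _ wq[OF i] t] zq i by blast
      moreover have "nu i > 0" using nupos i by simp
      ultimately show ?thesis by (simp add: exit_time_def w_def max_def)
    qed
    have T0: "0 \<le> T" using assms by simp
    define V where "V = T + D T"
    have t1: "tau 1 \<le> D T" using D_ge_tau1[OF T0] .
    have one: "(1::nat) \<in> {1..m}" using m1 by simp
    have minE: "Min ((\<lambda>j. exit_time nu tau z j T) ` {1..m}) = V"
    proof (rule Min_eqI)
      show "finite ((\<lambda>j. exit_time nu tau z j T) ` {1..m})" by simp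
      fix y assume "y \<in> (\<lambda>j. exit_time nu tau z j T) ` {1..m}"
      then obtain j where "j \<in> {1..m}" "y = exit_time nu tau z j T" by blast
      then show "V \<le> y" using E[of j T] T0 by (simp add: V_def)
    next
      show "V \<in> (\<lambda>j. exit_time nu tau z j T) ` {1..m}"
        using E[OF one T0] t1 one by (force simp: V_def)
    qed
    define S where "S = {i\<in>{1..m}. exit_time nu tau z i T = Min ((\<lambda>j. exit_time nu tau z j T) ` {1..m})}"
    have "(\<lambda>i. exit_time nu tau z i T) ` S = {V}"
    proof
      show "(\<lambda>i. exit_time nu tau z i T) ` S \<subseteq> {V}" using minE by (auto simp: S_def)
      have "1 \<in> S" using E[OF one T0] t1 one minE by (simp add: S_def V_def)
      then show "{V} \<subseteq> (\<lambda>i. exit_time nu tau z i T) ` S" using minE by (force simp: S_def)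
    qed
    then have maxS: "Max ((\<lambda>i. exit_time nu tau z i T) ` S) = V" by simp
    have ms: "makespan m nu tau f z T = ereal V"
      unfolding makespan_def
    proof (rule antisym)
      show "Sup {ereal (exit_time nu tau z i \<theta>) | i \<theta>. i \<in> {1..m} \<and> \<theta> \<in> {0..T} \<and> f i \<theta> > 0} \<le> ereal V"
      proof (rule Sup_least)
        fix y assume "y \<in> {ereal (exit_time nu tau z i \<theta>) | i \<theta>. i \<in> {1..m} \<and> \<theta> \<in> {0..T} \<and> f i \<theta> > 0}"
        then obtain i \<theta> where y: "y = ereal (exit_time nu tau z i \<theta>)" "i \<in> {1..m}" "\<theta> \<in> {0..T}" "f i \<theta> > 0"
          by blast
        have "tau i \<le> D \<theta>" using f_pos_tau[of \<theta> i] y by (simp add: f_def)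
        moreover have "D \<theta> \<le> D T" using D_mono y by simp
        ultimately show "y \<le> ereal V" using E[of i \<theta>] y by (simp add: V_def)
      qed
      have "f 1 T > 0" using f1_pos[OF T0] by (simp add: f_def)
      then have "ereal V \<in> {ereal (exit_time nu tau z i \<theta>) | i \<theta>. i \<in> {1..m} \<and> \<theta> \<in> {0..T} \<and> f i \<theta> > 0}"
        using E[OF one T0] t1 one T0 by (force simp: V_def)
      then show "ereal V \<le> Sup {ereal (exit_time nu tau z i \<theta>) | i \<theta>. i \<in> {1..m} \<and> \<theta> \<in> {0..T} \<and> f i \<theta> > 0}"
        by (rule Sup_upper)
    qed
    show "let S = {i\<in>{1..m}. exit_time nu tau z i T =
                        Min ((\<lambda>j. exit_time nu tau z j T) ` {1..m})}
             in makespan m nu tau f z T = ereal (Max ((\<lambda>i. exit_time nu tau z i T) ` S))"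
      using ms maxS by (simp add: Let_def S_def)
  qed
qed

end
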